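(* Let $M\ge4$ be even and $1<\alpha\le2$. Let $\tau(T_2)=I\otimes\tau(T_1)+\tau(T_1)\otimes I\in\mathbb{R}^{M^2\times M^2}$. Then every eigenvalue $\lambda_{\tau(T_2)}$ of $\tau(T_2)$ satisfies $$\frac{4\Delta t\,\theta}{(\mathrm{b}-\mathrm{a})^{\alpha}}<\lambda_{\tau(T_2)}<\frac{4\Delta t}{h^{\alpha}}\left[\frac{\Gamma(\alpha+1)}{\Gamma(\alpha/2+1)^2}-\frac{\theta h^{\alpha}}{(\mathrm{b}-\mathrm{a})^{\alpha}}\right]-\frac{2c_2\Delta t}{h^{\alpha}}.$$
   Context: Let $\mathrm{a}<\mathrm{b}$, $h=(\mathrm{b}-\mathrm{a})/(M+1)$, $\Delta t>0$, $\mu=\Delta t/h^{\alpha}$. For $k\in\mathbb{Z}$ let $c_k=\frac{(-1)^k\Gamma(\alpha+1)}{\Gamma(\alpha/2-k+1)\Gamma(\alpha/2+k+1)}$. Let $T_1=\mu T_0\in\mathbb{R}^{M\times M}$ where $T_0$ is the symmetric Toeplitz matrix with entries $[T_0]_{i,j}=c_{i-j}$. Define $\tau(T_1)=T_1-\mathrm{HC}(T_1)$, where $\mathrm{HC}(T_1)=\mu H$ and $H\in\mathbb{R}^{M\times M}$ is the Hankel matrix with $H_{i,j}=c_{i+j}$ if $i+j\le M-1$, $H_{i,j}=0$ if $i+j\in\{M,M+1,M+2\}$, and $H_{i,j}=c_{2M+2-i-j}$ if $i+j\ge M+3$ (first row $[c_2,\dots,c_{M-1},0,0]$, last row $[0,0,c_{M-1},\dots,c_2]$).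 The constant $\theta$ is $$\theta=\frac{\left(1-\frac{1+\alpha}{5+\alpha/2}\right)^{5+\frac{\alpha}{2}}e^{1+\alpha}\Gamma(\alpha+1)\sin\left(\frac{\pi\alpha}{2}\right)}{\pi\alpha}.$$ $I$ is the $M\times M$ identity and $\otimes$ the Kronecker product. *)

theory Defs
  imports "HOL-Analysis.Analysis" "Jordan_Normal_Form.Char_Poly"
begin

text \<open>Coefficients c_k (fractional centred difference weights). The reciprocal Gamma
  function rGamma is used, so that 1/Gamma at poles is 0, as intended.\<close>
definition frac_coeff :: "real \<Rightarrow> int \<Rightarrow> real" where
  "frac_coeff \<alpha> k = (-1) powi k * Gamma (\<alpha> + 1)
      * rGamma (\<alpha>/2 - of_int k + 1) * rGamma (\<alpha>/2 + of_int k + 1)"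

definition kron :: "'a::times mat \<Rightarrow> 'a mat \<Rightarrow> 'a mat" where
  "kron A B = mat (dim_row A * dim_row B) (dim_col A * dim_col B)
     (\<lambda>(i,j). A $$ (i div dim_row B, j div dim_col B) * B $$ (i mod dim_row B, j mod dim_col B))"

text \<open>T_0: symmetric Toeplitz matrix, entries c_{i-j} (0-based indices; differences
  are index-shift invariant).\<close>
definition T0 :: "real \<Rightarrow> nat \<Rightarrow> real mat" where
  "T0 \<alpha> M = mat M M (\<lambda>(i,j). frac_coeff \<alpha> (int i - int j))"

text \<open>Hankel correction H. Paper indices i,j are 1-based, so with 0-based i,j the
  paper's i+j equals i+j+2.\<close>
definition Hank :: "real \<Rightarrow> nat \<Rightarrow> real mat" where
  "Hank \<alpha> M = mat M M (\<lambda>(i,j).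
     let s = int i + int j + 2 in
     if s \<le> int M - 1 then frac_coeff \<alpha> s
     else if s \<le> int M + 2 then 0
     else frac_coeff \<alpha> (2 * int M + 2 - s))"

definition tauT1 :: "real \<Rightarrow> real \<Rightarrow> nat \<Rightarrow> real mat" where
  "tauT1 \<mu> \<alpha> M = \<mu> \<cdot>\<^sub>m T0 \<alpha> M - \<mu> \<cdot>\<^sub>m Hank \<alpha> M"

definition tauT2 :: "real \<Rightarrow> real \<Rightarrow> nat \<Rightarrow> real mat" where
  "tauT2 \<mu> \<alpha> M = kron (1\<^sub>m M) (tauT1 \<mu> \<alpha> M) + kron (tauT1 \<mu> \<alpha> M) (1\<^sub>m M)"

definition theta_const :: "real \<Rightarrow> real" where
  "theta_const \<alpha> = (1 - (1 + \<alpha>) / (5 + \<alpha>/2)) powr (5 + \<alpha>/2) * exp (1 + \<alpha>)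
     * Gamma (\<alpha> + 1) * sin (pi * \<alpha> / 2) / (pi * \<alpha>)"

end

theory Submission imports Defs begin

lemma fc_rec:
  assumes "0 < \<alpha>"
  shows "frac_coeff \<alpha> (int n + 1) = frac_coeff \<alpha> (int n) * (real n - \<alpha>/2) / (real n + 1 + \<alpha>/2)"
proof -
  have d: "real n + 1 + \<alpha>/2 \<noteq> 0" using assms by linarith
  have r1: "rGamma (\<alpha>/2 - of_int (int n+1) + 1) = (\<alpha>/2 - real n) * rGamma (\<alpha>/2 - of_int (int n) + 1)"
    using rGamma_plus1[of "\<alpha>/2 - real n"] by (simp add: algebra_simps)
  have r2: "rGamma (\<alpha>/2 + of_int (int n+1) + 1) = rGamma (\<alpha>/2 + of_int (int n) + 1) / (real n + 1 + \<alpha>/2)"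
    using rGamma_plus1[of "\<alpha>/2 + real n + 1"] d by (simp add: field_simps)
  have p: "(-1::real) powi (int n+1) = - ((-1) powi (int n))"
    by (simp add: power_int_add)
  show ?thesis unfolding frac_coeff_def r1 r2 p using d
    by (simp add: field_simps)
qed

lemma fc_sym: "frac_coeff \<alpha> (- k) = frac_coeff \<alpha> k"
proof -
  have sq: "(-1::real) powi k * (-1) powi k = 1"
    by (simp add: power_int_mult_distrib[symmetric])
  have "(-1::real) powi (-k) = (-1) powi k"
    using inverse_unique[OF sq] by (simp add: power_int_minus)
  then show ?thesis unfolding frac_coeff_def by (simp add: algebra_simps)
qed

lemma fc_abs: "frac_coeff \<alpha> (int i - int j) = frac_coeff \<alpha> (int (if i \<le> j then j - i else i - j))"
proof (cases "i \<le> j")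
  case True
  then have "int i - int j = - int (j - i)" by simp
  then show ?thesis using True fc_sym[of \<alpha> "int j - int i"] by simp
next
  case False
  then show ?thesis by simp
qed

lemma fc0_pos: assumes "0 < \<alpha>" shows "frac_coeff \<alpha> 0 > 0"
proof -
  have "Gamma (\<alpha> + 1) > 0" "rGamma (\<alpha>/2+1) > 0" using assms by (auto simp: rGamma_inverse_Gamma)
  then show ?thesis unfolding frac_coeff_def by simp
qed

lemma fc0_eq: "frac_coeff \<alpha> 0 = Gamma (\<alpha> + 1) / (Gamma (\<alpha>/2 + 1))\<^sup>2"
  unfolding frac_coeff_def by (simp add: rGamma_inverse_Gamma power2_eq_square field_simps)

context
  fixes \<alpha> :: real
  assumes a1: "1 < \<alpha>" and a2: "\<alpha> \<le> 2"
begin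

abbreviation "c n \<equiv> frac_coeff \<alpha> (int n)"

lemma c_Suc: "c (Suc n) = c n * (real n - \<alpha>/2) / (real n + 1 + \<alpha>/2)"
proof -
  have "int (Suc n) = int n + 1" by simp
  then show ?thesis using fc_rec[of \<alpha> n] a1 by (simp only:)
qed

lemma c1_neg: "c 1 < 0"
  using c_Suc[of 0] fc0_pos[of \<alpha>] a1 by (simp add: divide_neg_pos mult_pos_neg)

lemma c_Suc_q: "n \<ge> 1 \<Longrightarrow> \<exists>q. c (Suc n) = c n * q \<and> 0 \<le> q \<and> q < 1"
proof -
  assume n: "n \<ge> 1"
  have "(real n - \<alpha>/2) / (real n + 1 + \<alpha>/2) < 1" "0 \<le> (real n - \<alpha>/2) / (real n + 1 + \<alpha>/2)"
    using a1 a2 n by auto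
  then show ?thesis using c_Suc[of n] by (intro exI[of _ "(real n - \<alpha>/2) / (real n + 1 + \<alpha>/2)"]) simp
qed

lemma c_nonpos: "n \<ge> 1 \<Longrightarrow> c n \<le> 0"
proof (induction n rule: dec_induct)
  case base then show ?case using c1_neg by simp
next
  case (step m)
  then obtain q where "c (Suc m) = c m * q" "0 \<le> q" using c_Suc_q by blast
  then show ?case using step mult_nonpos_nonneg by simp
qed

lemma c_nonpos_mono: "n \<ge> 1 \<Longrightarrow> c n \<le> c (Suc n)"
proof -
  assume n: "n \<ge> 1"
  then obtain q where q: "c (Suc n) = c n * q" "q < 1" using c_Suc_q by blast
  have "c n * 1 \<le> c n * q" using q(2) c_nonpos[OF n] by (intro mult_left_mono_neg) auto
  then show ?thesis using q by simp
qed

lemma c_mono: assumes "1 \<le> m" "m \<le> n" shows "c m \<le> c n"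
  using assms(2,1)
proof (induction n rule: dec_induct)
  case base then show ?case by simp
next
  case (step k) then show ?case using c_nonpos_mono[of k] by auto
qed

lemma c2_gt_c1: "c 1 < c 2"
proof -
  have "c 2 = c 1 * ((1 - \<alpha>/2) / (2 + \<alpha>/2))" using c_Suc[of 1] by (simp add: numeral_2_eq_2)
  moreover have "(1 - \<alpha>/2) / (2 + \<alpha>/2) < 1" using a1 a2 by auto
  ultimately show ?thesis using c1_neg mult_strict_left_mono_neg[of "(1 - \<alpha>/2) / (2 + \<alpha>/2)" 1 "c 1"] by simp
qed

definition Pf :: "nat \<Rightarrow> real" where "Pf n = c n * (\<alpha>/2 - real n) / \<alpha>"

lemma c_key: "c (Suc n) * (real n + 1 + \<alpha>/2) = c n * (real n - \<alpha>/2)"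
proof -
  have "real n + 1 + \<alpha>/2 \<noteq> 0" using a1 by linarith
  then show ?thesis using c_Suc[of n] by simp
qed

lemma Pf_step: "Pf n + c (Suc n) = Pf (Suc n)"
proof -
  define A where "A = c n"
  define B where "B = c (Suc n)"
  have key: "B * (real n + 1 + \<alpha>/2) = A * (real n - \<alpha>/2)" unfolding A_def B_def by (rule c_key)
  have "A*(\<alpha>/2 - real n) + B*\<alpha> - B*(\<alpha>/2 - real (Suc n)) = B * (real n + 1 + \<alpha>/2) - A * (real n - \<alpha>/2)"
    by (simp add: algebra_simps)
  with key have "A*(\<alpha>/2 - real n) + B*\<alpha> = B*(\<alpha>/2 - real (Suc n))" by simp
  then have "A*(\<alpha>/2 - real n)/\<alpha> + B = B*(\<alpha>/2 - real (Suc n))/\<alpha>"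
    using a1 by (simp add: field_simps)
  then show ?thesis unfolding Pf_def A_def B_def by simp
qed

lemma sum_c: "(\<Sum>k\<le>n. c k) = c 0 / 2 + Pf n"
proof (induction n)
  case 0 then show ?case using a1 by (simp add: Pf_def)
next
  case (Suc n)
  then show ?case using Pf_step[of n] by simp
qed

lemma Pf_Suc: "Pf (Suc n) = Pf n * ((real n + 1 - \<alpha>/2) / (real n + 1 + \<alpha>/2))"
proof -
  define A where "A = c n"
  define B where "B = c (Suc n)"
  have d: "real n + 1 + \<alpha>/2 > 0" using a1 by linarith
  have key: "B = A * (real n - \<alpha>/2) / (real n + 1 + \<alpha>/2)" unfolding A_def B_def by (rule c_Suc)
  have "B * (\<alpha>/2 - real (Suc n)) / \<alpha> = A * (\<alpha>/2 - real n) / \<alpha> * ((real n + 1 - \<alpha>/2) / (real n + 1 + \<alpha>/2))"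
    unfolding key using d by (simp add: field_simps)
  then show ?thesis unfolding Pf_def A_def B_def .
qed

lemma Pf0: "Pf 0 = c 0 / 2" using a1 by (simp add: Pf_def)

lemma Pf_Suc_q: "\<exists>q. Pf (Suc n) = Pf n * q \<and> 0 \<le> q \<and> q \<le> 1 \<and> (n = 0 \<longrightarrow> q < 1)"
proof -
  have "(real n + 1 - \<alpha>/2) / (real n + 1 + \<alpha>/2) \<le> 1" "0 \<le> (real n + 1 - \<alpha>/2) / (real n + 1 + \<alpha>/2)"
    "n = 0 \<longrightarrow> (real n + 1 - \<alpha>/2) / (real n + 1 + \<alpha>/2) < 1"
    using a1 a2 by auto
  then show ?thesis using Pf_Suc[of n] by (intro exI[of _ "(real n + 1 - \<alpha>/2) / (real n + 1 + \<alpha>/2)"]) simp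
qed

lemma Pf_nonneg_mono: "0 \<le> Pf (Suc n) \<and> Pf (Suc n) \<le> Pf n"
proof (induction n)
  case 0
  have "0 < Pf 0" using Pf0 fc0_pos[of \<alpha>] a1 by simp
  moreover obtain q where "Pf (Suc 0) = Pf 0 * q" "0 \<le> q" "q \<le> 1" using Pf_Suc_q[of 0] by blast
  ultimately show ?case using mult_left_mono[of q 1 "Pf 0"] by simp
next
  case (Suc n)
  obtain q where "Pf (Suc (Suc n)) = Pf (Suc n) * q" "0 \<le> q" "q \<le> 1" using Pf_Suc_q[of "Suc n"] by blast
  then show ?case using Suc mult_left_mono[of q 1 "Pf (Suc n)"] by simp
qed

lemma Pf_nonneg: "0 \<le> Pf n"
  using Pf_nonneg_mono[of "n - 1"] Pf0 fc0_pos[of \<alpha>] a1 by (cases n) auto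

lemma Pf_antimono: "m \<le> n \<Longrightarrow> Pf n \<le> Pf m"
proof (induction n rule: dec_induct)
  case base then show ?case by simp
next
  case (step k) then show ?case using Pf_nonneg_mono[of k] by auto
qed

lemma Pf_strict: "n \<ge> 1 \<Longrightarrow> Pf n < Pf 0"
proof -
  assume "n \<ge> 1"
  have "0 < Pf 0" using Pf0 fc0_pos[of \<alpha>] a1 by simp
  moreover obtain q where "Pf (Suc 0) = Pf 0 * q" "q < 1" using Pf_Suc_q[of 0] by blast
  ultimately have "Pf 1 < Pf 0" using mult_strict_left_mono[of q 1 "Pf 0"] by simp
  then show ?thesis using Pf_antimono[OF \<open>n \<ge> 1\<close>] by linarith
qed


lemma Pf_poch: "\<alpha> < 2 \<Longrightarrow> Pf n = c 0 / 2 * pochhammer (1 - \<alpha>/2) n / pochhammer (1 + \<alpha>/2) n"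
proof (induction n)
  case 0 then show ?case using Pf0 by simp
next
  case (Suc n)
  have p: "pochhammer (1 + \<alpha>/2) n > 0" using a1 by (intro pochhammer_pos) auto
  have d: "real n + 1 + \<alpha>/2 > 0" using a1 by linarith
  have "Pf (Suc n) = c 0 / 2 * pochhammer (1 - \<alpha>/2) n / pochhammer (1 + \<alpha>/2) n * ((real n + 1 - \<alpha>/2) / (real n + 1 + \<alpha>/2))"
    using Pf_Suc[of n] Suc by simp
  also have "\<dots> = c 0 / 2 * (pochhammer (1 - \<alpha>/2) n * (1 - \<alpha>/2 + real n)) / (pochhammer (1 + \<alpha>/2) n * (1 + \<alpha>/2 + real n))"
    using p d by (simp add: field_simps)
  also have "\<dots> = c 0 / 2 * pochhammer (1 - \<alpha>/2) (Suc n) / pochhammer (1 + \<alpha>/2) (Suc n)"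
    by (simp add: pochhammer_Suc)
  finally show ?case .
qed

end

lemma Gamma_shift_bound:
  fixes y s :: real
  assumes y: "y > 0" and s: "0 \<le> s" "s \<le> 1"
  shows "Gamma (y + 1 + s) \<le> Gamma (y + 1) * (y + 1) powr s"
proof -
  have nz: "y + 1 \<notin> \<int>\<^sub>\<le>\<^sub>0" using y by (auto elim!: nonpos_Ints_cases)
  have g2: "Gamma (y + 1 + 1) = (y + 1) * Gamma (y + 1)" using Gamma_plus1[OF nz] by simp
  have pos1: "Gamma (y+1) > 0" using y by simp
  have "(ln \<circ> Gamma) ((1 - s) *\<^sub>R (y+1) + s *\<^sub>R (y+2)) \<le> (1 - s) * (ln \<circ> Gamma) (y+1) + s * (ln \<circ> Gamma) (y+2)"
    using y s by (intro convex_onD[OF log_convex_Gamma_real]) auto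
  moreover have "(1 - s) *\<^sub>R (y+1) + s *\<^sub>R (y+2) = y + 1 + s" by (simp add: algebra_simps)
  moreover have "ln (Gamma (y+2)) = ln (y+1) + ln (Gamma (y+1))"
  proof -
    have "Gamma (y+2) = (y + 1) * Gamma (y + 1)" using g2 by (simp add: add.assoc)
    then show ?thesis using ln_mult[of "y+1" "Gamma(y+1)"] pos1 y by simp
  qed
  ultimately have "ln (Gamma (y + 1 + s)) \<le> ln (Gamma (y+1)) + s * ln (y+1)"
    by (simp add: algebra_simps)
  then have "exp (ln (Gamma (y + 1 + s))) \<le> exp (ln (Gamma (y+1)) + s * ln (y+1))" by simp
  also have "\<dots> = Gamma (y+1) * (y+1) powr s" using pos1 y by (simp add: exp_add powr_def mult.commute)
  finally show ?thesis using y s by simp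
qed

lemma X_le1:
  fixes \<alpha> :: real
  assumes "1 < \<alpha>" "\<alpha> \<le> 2"
  shows "(1 - (1 + \<alpha>) / (5 + \<alpha>/2)) powr (5 + \<alpha>/2) * exp (1 + \<alpha>) \<le> 1"
proof -
  define u where "u = (1 + \<alpha>) / (5 + \<alpha>/2)"
  have u: "0 < u" "u < 1" using assms unfolding u_def by (auto simp: field_simps)
  have e: "(5 + \<alpha>/2) * u = 1 + \<alpha>" using assms unfolding u_def by (simp add: field_simps)
  have "ln (1 - u) \<le> (1 - u) - 1" using u by (intro ln_le_minus_one) auto
  then have "(5 + \<alpha>/2) * ln (1 - u) \<le> (5 + \<alpha>/2) * (- u)" using assms by (intro mult_left_mono) auto
  then have "(5 + \<alpha>/2) * ln (1 - u) \<le> - (1 + \<alpha>)" using e by simp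
  then have "(1 - u) powr (5 + \<alpha>/2) \<le> exp (- (1 + \<alpha>))" using u by (simp add: powr_def mult.commute)
  then have "(1 - u) powr (5 + \<alpha>/2) * exp (1 + \<alpha>) \<le> exp (- (1 + \<alpha>)) * exp (1 + \<alpha>)"
    by (intro mult_right_mono) auto
  also have "\<dots> = 1" by (simp add: exp_add[symmetric])
  finally show ?thesis unfolding u_def .
qed

lemma Gamma_reflection_real:
  fixes x :: real
  shows "Gamma x * Gamma (1 - x) = pi / sin (pi * x)"
proof -
  have "Gamma (complex_of_real x) * Gamma (1 - complex_of_real x) = of_real pi / sin (of_real pi * of_real x)"
    by (rule Gamma_reflection_complex)
  also have "Gamma (1 - complex_of_real x) = of_real (Gamma (1 - x))"
    using Gamma_complex_of_real[of "1 - x"] by simp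
  also have "sin (of_real pi * of_real x) = (of_real (sin (pi * x)) :: complex)"
    by (simp flip: sin_of_real)
  finally have "complex_of_real (Gamma x * Gamma (1 - x)) = complex_of_real (pi / sin (pi * x))"
    by (simp add: Gamma_complex_of_real)
  then show ?thesis using of_real_eq_iff by blast
qed

context
  fixes \<alpha> :: real
  assumes a1: "1 < \<alpha>" and a2: "\<alpha> \<le> 2"
begin

lemma Pf_theta: assumes M: "M \<ge> 1" shows "theta_const \<alpha> / real (M+1) powr \<alpha> \<le> Pf \<alpha> (M - 1)"
proof (cases "\<alpha> = 2")
  case True
  then have "theta_const \<alpha> = 0" unfolding theta_const_def by simp
  then show ?thesis using Pf_nonneg[OF a1 a2] by simp
next
  case False
  then have a3: "\<alpha> < 2" using a2 by simp
  define \<beta> where "\<beta> = \<alpha>/2"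
  have b: "1/2 < \<beta>" "\<beta> < 1" using a1 a3 unfolding \<beta>_def by auto
  define G where "G = Gamma \<beta>"
  define G2 where "G2 = Gamma (1 - \<beta>)"
  define g1 where "g1 = Gamma (real M - \<beta>)"
  define g2 where "g2 = Gamma (real M + \<beta>)"
  define X where "X = (1 - (1 + \<alpha>) / (5 + \<alpha>/2)) powr (5 + \<alpha>/2) * exp (1 + \<alpha>)"
  define K where "K = Gamma (\<alpha> + 1) / (\<alpha> * G * G2)"
  have Gp: "G > 0" "G2 > 0" "g1 > 0" "g2 > 0" "Gamma (\<alpha>+1) > 0"
    using b M a1 unfolding G_def G2_def g1_def g2_def by auto
  have Kp: "K > 0" unfolding K_def using Gp a1 by auto
  have nz: "\<beta> \<notin> \<int>\<^sub>\<le>\<^sub>0" "1 - \<beta> \<notin> \<int>\<^sub>\<le>\<^sub>0" "1 + \<beta> \<notin> \<int>\<^sub>\<le>\<^sub>0"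
    using b by (auto elim!: nonpos_Ints_cases)
  have G1: "Gamma (\<beta> + 1) = \<beta> * G" unfolding G_def using Gamma_plus1[OF nz(1)] .
  have refl: "G * G2 = pi / sin (pi * \<beta>)" unfolding G_def G2_def by (rule Gamma_reflection_real)
  have sinpos: "sin (pi * \<beta>) > 0" using b by (intro sin_gt_zero) auto
  have th: "theta_const \<alpha> = X * K"
  proof -
    have S: "sin (pi * \<alpha> / 2) = pi / (G * G2)" using refl sinpos Gp unfolding \<beta>_def by (simp add: field_simps)
    show ?thesis unfolding theta_const_def X_def K_def S using Gp by (simp add: field_simps)
  qed
  have p1: "pochhammer (1 - \<beta>) (M - 1) = g1 / G2"
    unfolding g1_def G2_def using pochhammer_Gamma[OF nz(2), of "M - 1"] M by (simp add: of_nat_diff)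
  have p2: "pochhammer (1 + \<beta>) (M - 1) = g2 / Gamma (1 + \<beta>)"
    unfolding g2_def using pochhammer_Gamma[OF nz(3), of "M - 1"] M by (simp add: of_nat_diff add.commute)
  have c0: "frac_coeff \<alpha> (int 0) = Gamma (\<alpha> + 1) / (\<beta> * G)\<^sup>2"
    using fc0_eq[of \<alpha>] G1 unfolding \<beta>_def by simp
  have PfK: "Pf \<alpha> (M - 1) = K * (g1 / g2)"
  proof -
    have "Pf \<alpha> (M - 1) = frac_coeff \<alpha> (int 0) / 2 * pochhammer (1 - \<beta>) (M - 1) / pochhammer (1 + \<beta>) (M - 1)"
      using Pf_poch[OF a1 a2 a3] unfolding \<beta>_def by simp
    also have "\<dots> = K * (g1 / g2)" unfolding p1 p2 c0 K_def using G1 Gp b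
      by (simp add: field_simps power2_eq_square \<beta>_def add.commute)
    finally show ?thesis .
  qed
  have gb: "g2 \<le> g1 * real (M+1) powr \<alpha>"
  proof -
    define y where "y = real M - \<beta>"
    have y: "y > 0" using M b unfolding y_def by auto
    have "g2 = Gamma (y + 1 + (\<alpha> - 1))" unfolding g2_def y_def \<beta>_def by (simp add: algebra_simps)
    also have "\<dots> \<le> Gamma (y + 1) * (y + 1) powr (\<alpha> - 1)"
      using y a1 a2 by (intro Gamma_shift_bound) auto
    also have "Gamma (y + 1) = y * g1"
    proof -
      have "y \<notin> \<int>\<^sub>\<le>\<^sub>0" using y by (auto elim!: nonpos_Ints_cases)
      then show ?thesis using Gamma_plus1[of y] unfolding g1_def y_def by simp
    qed
    also have "y * g1 * (y + 1) powr (\<alpha> - 1) \<le> real (M+1) * g1 * real (M+1) powr (\<alpha> - 1)"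
      using y b Gp a1 by (intro mult_mono powr_mono2) (auto simp: y_def)
    also have "\<dots> = g1 * real (M+1) powr \<alpha>"
      by (simp add: powr_diff field_simps)
    finally show ?thesis .
  qed
  have X1: "X \<le> 1" unfolding X_def using X_le1[OF a1 a2] .
  have Xn: "X \<ge> 0" unfolding X_def by simp
  have Mp: "real (M+1) powr \<alpha> > 0" by simp
  have "X * g2 \<le> g1 * real (M+1) powr \<alpha>"
    using mult_mono[OF X1 gb] Xn Gp by simp
  then have "X / real (M+1) powr \<alpha> \<le> g1 / g2" using Mp Gp by (simp add: field_simps)
  then have "K * (X / real (M+1) powr \<alpha>) \<le> K * (g1 / g2)" using Kp by (intro mult_left_mono) auto
  then show ?thesis unfolding th PfK by (simp add: mult.commute)
qed

end


lemma quad_ident: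
  fixes a :: "nat \<Rightarrow> nat \<Rightarrow> real" and x :: "nat \<Rightarrow> real" and s :: real
  assumes sym: "\<And>i j. i<n \<Longrightarrow> j<n \<Longrightarrow> a i j = a j i" and s: "s * s = 1"
  shows "(\<Sum>i<n. \<Sum>j<n. a i j * (x i + s * x j)\<^sup>2)
       = 2 * (\<Sum>i<n. (\<Sum>j<n. a i j) * (x i)\<^sup>2) + 2 * s * (\<Sum>i<n. \<Sum>j<n. a i j * x i * x j)"
proof -
  have e: "a i j * (x i + s * x j)\<^sup>2 = a i j * (x i)\<^sup>2 + a i j * (x j)\<^sup>2 + 2 * s * (a i j * x i * x j)" for i j
    using s by (simp add: power2_eq_square algebra_simps)
  have A: "(\<Sum>i<n. \<Sum>j<n. a i j * (x j)\<^sup>2) = (\<Sum>i<n. \<Sum>j<n. a i j * (x i)\<^sup>2)"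
  proof -
    have "(\<Sum>i<n. \<Sum>j<n. a i j * (x j)\<^sup>2) = (\<Sum>j<n. \<Sum>i<n. a i j * (x j)\<^sup>2)" by (rule sum.swap)
    also have "\<dots> = (\<Sum>j<n. \<Sum>i<n. a j i * (x j)\<^sup>2)"
      by (intro sum.cong refl) (simp add: sym)
    finally show ?thesis .
  qed
  have B: "(\<Sum>i<n. \<Sum>j<n. a i j * (x i)\<^sup>2) = (\<Sum>i<n. (\<Sum>j<n. a i j) * (x i)\<^sup>2)"
    by (simp add: sum_distrib_right)
  show ?thesis
    by (simp only: e sum.distrib A B flip: sum_distrib_left)
qed

lemma pair_bound:
  fixes a :: "nat \<Rightarrow> nat \<Rightarrow> real" and x :: "nat \<Rightarrow> real" and s :: real
  assumes off: "\<And>i j. i<n \<Longrightarrow> j<n \<Longrightarrow> i\<noteq>j \<Longrightarrow> a i j \<le> 0" and k: "k+1 < n"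
  shows "(\<Sum>i<n. \<Sum>j<n. a i j * (x i + s * x j)\<^sup>2)
     \<le> (\<Sum>i<n. a i i * (x i + s * x i)\<^sup>2) + a k (k+1) * (x k + s * x (k+1))\<^sup>2"
proof -
  define f where "f i j = (if i = j then a i i * (x i + s * x i)\<^sup>2 else 0)
     + (if i = k \<and> j = k+1 then a k (k+1) * (x k + s * x (k+1))\<^sup>2 else 0)" for i j
  have "a i j * (x i + s * x j)\<^sup>2 \<le> f i j" if "i<n" "j<n" for i j
  proof (cases "i = j")
    case True then show ?thesis by (simp add: f_def)
  next
    case False
    then have "a i j * (x i + s * x j)\<^sup>2 \<le> 0" using off[OF that False]
      by (simp add: mult_nonpos_nonneg)
    then show ?thesis using False by (auto simp: f_def)
  qed
  then have "(\<Sum>i<n. \<Sum>j<n. a i j * (x i + s * x j)\<^sup>2) \<le> (\<Sum>i<n. \<Sum>j<n. f i j)"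
    by (intro sum_mono) auto
  also have "(\<Sum>i<n. \<Sum>j<n. f i j) = (\<Sum>i<n. a i i * (x i + s * x i)\<^sup>2) + a k (k+1) * (x k + s * x (k+1))\<^sup>2"
  proof -
    have "(\<Sum>i<n. \<Sum>j<n. f i j) = (\<Sum>i<n. a i i * (x i + s * x i)\<^sup>2 + (if i = k then a k (k+1) * (x k + s * x (k+1))\<^sup>2 else 0))"
    proof (intro sum.cong refl)
      fix i assume i: "i \<in> {..<n}"
      have "(\<Sum>j<n. f i j) = (\<Sum>j<n. (if i = j then a i i * (x i + s * x i)\<^sup>2 else 0))
          + (\<Sum>j<n. (if j = k+1 then (if i = k then a k (k+1) * (x k + s * x (k+1))\<^sup>2 else 0) else 0))"
        unfolding f_def sum.distrib by (intro arg_cong2[where f="(+)"] sum.cong) auto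
      also have "\<dots> = a i i * (x i + s * x i)\<^sup>2 + (if i = k then a k (k+1) * (x k + s * x (k+1))\<^sup>2 else 0)"
        using i k by (simp add: sum.delta)
      finally show "(\<Sum>j<n. f i j) = \<dots>" .
    qed
    also have "\<dots> = (\<Sum>i<n. a i i * (x i + s * x i)\<^sup>2) + a k (k+1) * (x k + s * x (k+1))\<^sup>2"
      using k by (simp add: sum.distrib sum.delta)
    finally show ?thesis .
  qed
  finally show ?thesis .
qed

lemma exists_break:
  fixes x :: "nat \<Rightarrow> real" and s :: real
  assumes s: "s * s = 1" and x0: "x 0 = 0" and nz: "\<exists>i<n. x i \<noteq> 0"
  shows "\<exists>k. k+1 < n \<and> x k + s * x (k+1) \<noteq> 0"
proof (rule ccontr)
  assume neg: "\<not> ?thesis"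
  then have h: "x (k+1) = - s * x k" if "k+1<n" for k
  proof -
    have "x k + s * x (k+1) = 0" using neg that by auto
    then have e1: "s * x k + s * (s * x (k+1)) = 0" by (metis distrib_left mult_zero_right)
    have e2: "s * (s * x (k+1)) = x (k+1)" using s by (simp add: mult.assoc[symmetric])
    have "x (k+1) = - (s * x k)" using e1 e2 by linarith
    then show ?thesis by simp
  qed
  have "i < n \<longrightarrow> x i = 0" for i
  proof (induction i)
    case 0 then show ?case using x0 by simp
  next
    case (Suc i) then show ?case using h[of i] by simp
  qed
  then show False using nz by auto
qed

lemma quad_bounds:
  fixes a :: "nat \<Rightarrow> nat \<Rightarrow> real" and x :: "nat \<Rightarrow> real" and n :: nat and L U :: real
  assumes n: "2 \<le> n"
  and sym: "\<And>i j. i<n \<Longrightarrow> j<n \<Longrightarrow> a i j = a j i"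
  and off: "\<And>i j. i<n \<Longrightarrow> j<n \<Longrightarrow> i\<noteq>j \<Longrightarrow> a i j \<le> 0"
  and adj: "\<And>i. i+1<n \<Longrightarrow> a i (i+1) < 0"
  and rowL: "\<And>i. i<n \<Longrightarrow> L \<le> (\<Sum>j<n. a i j)" and row0L: "L < (\<Sum>j<n. a 0 j)"
  and rowU: "\<And>i. i<n \<Longrightarrow> 2 * a i i - (\<Sum>j<n. a i j) \<le> U"
  and row0U: "2 * a 0 0 - (\<Sum>j<n. a 0 j) < U"
  and nz: "\<exists>i<n. x i \<noteq> 0"
  shows "L * (\<Sum>i<n. (x i)\<^sup>2) < (\<Sum>i<n. \<Sum>j<n. a i j * x i * x j)
       \<and> (\<Sum>i<n. \<Sum>j<n. a i j * x i * x j) < U * (\<Sum>i<n. (x i)\<^sup>2)"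
proof -
  define Q where "Q = (\<Sum>i<n. \<Sum>j<n. a i j * x i * x j)"
  define r where "r i = (\<Sum>j<n. a i j)" for i
  have n0: "0 < n" using n by simp
  have key: "\<exists>k. k+1 < n \<and> (0 < (x 0)\<^sup>2 \<or> 0 < (x k + s * x (k+1))\<^sup>2)" if s: "s * s = 1" for s
  proof (cases "x 0 = 0")
    case True
    then obtain k where "k+1 < n" "x k + s * x (k+1) \<noteq> 0" using exists_break[OF s True nz] by blast
    then show ?thesis by auto
  next
    case False
    then show ?thesis using n by (intro exI[of _ 0]) auto
  qed
  have lower: "L * (\<Sum>i<n. (x i)\<^sup>2) < Q"
  proof -
    obtain k where k: "k+1 < n" "0 < (x 0)\<^sup>2 \<or> 0 < (x k + (-1) * x (k+1))\<^sup>2" using key[of "-1"] by auto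
    have I: "(\<Sum>i<n. \<Sum>j<n. a i j * (x i + (-1) * x j)\<^sup>2) = 2 * (\<Sum>i<n. r i * (x i)\<^sup>2) - 2 * Q"
      using quad_ident[of n a "-1" x, OF sym] unfolding Q_def r_def by simp
    have P: "(\<Sum>i<n. \<Sum>j<n. a i j * (x i + (-1) * x j)\<^sup>2) \<le> a k (k+1) * (x k + (-1) * x (k+1))\<^sup>2"
      using pair_bound[of n a k x "-1", OF off k(1)] by simp
    have S: "(\<Sum>i<n. r i * (x i)\<^sup>2) \<ge> L * (\<Sum>i<n. (x i)\<^sup>2) + (r 0 - L) * (x 0)\<^sup>2"
    proof -
      have "(\<Sum>i<n. r i * (x i)\<^sup>2) - L * (\<Sum>i<n. (x i)\<^sup>2) = (\<Sum>i<n. (r i - L) * (x i)\<^sup>2)"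
        by (simp add: sum_distrib_left sum_subtractf algebra_simps)
      also have "\<dots> \<ge> (r 0 - L) * (x 0)\<^sup>2"
        using n0 rowL unfolding r_def
        by (intro member_le_sum[where f="\<lambda>i. (r i - L) * (x i)\<^sup>2", unfolded r_def]) auto
      finally show ?thesis by simp
    qed
    have r0: "r 0 - L > 0" using row0L unfolding r_def by simp
    have ak: "a k (k+1) < 0" using adj k(1) by simp
    have "0 < (r 0 - L) * (x 0)\<^sup>2 - a k (k+1) * (x k + (-1) * x (k+1))\<^sup>2 / 2"
    proof -
      have t1: "0 \<le> (r 0 - L) * (x 0)\<^sup>2" using r0 by simp
      have t2: "0 \<le> - a k (k+1) * (x k + (-1) * x (k+1))\<^sup>2"
        using mult_nonpos_nonneg[of "a k (k+1)" "(x k + (-1) * x (k+1))\<^sup>2"] ak by simp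
      from k(2) show ?thesis
      proof
        assume "0 < (x 0)\<^sup>2" then have "0 < (r 0 - L) * (x 0)\<^sup>2" using r0 by simp
        then show ?thesis using t2 by simp
      next
        assume "0 < (x k + (-1) * x (k+1))\<^sup>2"
        then have "0 < - a k (k+1) * (x k + (-1) * x (k+1))\<^sup>2" using ak by (simp add: mult_neg_pos)
        then show ?thesis using t1 by simp
      qed
    qed
    then show ?thesis using I P S by simp
  qed
  have upper: "Q < U * (\<Sum>i<n. (x i)\<^sup>2)"
  proof -
    obtain k where k: "k+1 < n" "0 < (x 0)\<^sup>2 \<or> 0 < (x k + 1 * x (k+1))\<^sup>2" using key[of 1] by auto
    have I: "(\<Sum>i<n. \<Sum>j<n. a i j * (x i + 1 * x j)\<^sup>2) = 2 * (\<Sum>i<n. r i * (x i)\<^sup>2) + 2 * Q"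
      using quad_ident[of n a 1 x, OF sym] unfolding Q_def r_def by simp
    have P: "(\<Sum>i<n. \<Sum>j<n. a i j * (x i + 1 * x j)\<^sup>2) \<le> (\<Sum>i<n. a i i * (x i + 1 * x i)\<^sup>2) + a k (k+1) * (x k + 1 * x (k+1))\<^sup>2"
      by (rule pair_bound[OF off k(1)])
    have D: "(\<Sum>i<n. a i i * (x i + 1 * x i)\<^sup>2) = 4 * (\<Sum>i<n. a i i * (x i)\<^sup>2)"
      by (simp add: sum_distrib_left power2_eq_square algebra_simps)
    have S: "(\<Sum>i<n. (2 * a i i - r i) * (x i)\<^sup>2) \<le> U * (\<Sum>i<n. (x i)\<^sup>2) - (U - (2 * a 0 0 - r 0)) * (x 0)\<^sup>2"
    proof -
      have "U * (\<Sum>i<n. (x i)\<^sup>2) - (\<Sum>i<n. (2 * a i i - r i) * (x i)\<^sup>2) = (\<Sum>i<n. (U - (2 * a i i - r i)) * (x i)\<^sup>2)"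
        unfolding sum_distrib_left sum_subtractf[symmetric] by (intro sum.cong) (auto simp: algebra_simps)
      also have "\<dots> \<ge> (U - (2 * a 0 0 - r 0)) * (x 0)\<^sup>2"
        using n0 rowU unfolding r_def
        by (intro member_le_sum[where f="\<lambda>i. (U - (2 * a i i - r i)) * (x i)\<^sup>2", unfolded r_def]) auto
      finally show ?thesis by simp
    qed
    have E: "(\<Sum>i<n. (2 * a i i - r i) * (x i)\<^sup>2) = 2 * (\<Sum>i<n. a i i * (x i)\<^sup>2) - (\<Sum>i<n. r i * (x i)\<^sup>2)"
      by (simp add: sum_distrib_left sum_subtractf algebra_simps)
    have r0: "U - (2 * a 0 0 - r 0) > 0" using row0U unfolding r_def by simp
    have ak: "a k (k+1) < 0" using adj k(1) by simp
    have "0 < (U - (2 * a 0 0 - r 0)) * (x 0)\<^sup>2 - a k (k+1) * (x k + 1 * x (k+1))\<^sup>2 / 2"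
    proof -
      have t1: "0 \<le> (U - (2 * a 0 0 - r 0)) * (x 0)\<^sup>2" using r0 by simp
      have t2: "0 \<le> - a k (k+1) * (x k + 1 * x (k+1))\<^sup>2"
        using mult_nonpos_nonneg[of "a k (k+1)" "(x k + 1 * x (k+1))\<^sup>2"] ak by simp
      from k(2) show ?thesis
      proof
        assume "0 < (x 0)\<^sup>2" then have "0 < (U - (2 * a 0 0 - r 0)) * (x 0)\<^sup>2" using r0 by simp
        then show ?thesis using t2 by simp
      next
        assume "0 < (x k + 1 * x (k+1))\<^sup>2"
        then have "0 < - a k (k+1) * (x k + 1 * x (k+1))\<^sup>2" using ak by (simp add: mult_neg_pos)
        then show ?thesis using t1 by simp
      qed
    qed
    then show ?thesis using I P D S E by simp
  qed
  show ?thesis using lower upper unfolding Q_def by simp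
qed


definition Hv :: "real \<Rightarrow> nat \<Rightarrow> nat \<Rightarrow> nat \<Rightarrow> real" where
  "Hv \<alpha> M i j = (let s = int i + int j + 2 in
     if s \<le> int M - 1 then frac_coeff \<alpha> s
     else if s \<le> int M + 2 then 0
     else frac_coeff \<alpha> (2 * int M + 2 - s))"

definition av :: "real \<Rightarrow> nat \<Rightarrow> nat \<Rightarrow> nat \<Rightarrow> real" where
  "av \<alpha> M i j = frac_coeff \<alpha> (int i - int j) - Hv \<alpha> M i j"

lemma tauT1_index: "i < M \<Longrightarrow> j < M \<Longrightarrow> tauT1 \<mu> \<alpha> M $$ (i,j) = \<mu> * av \<alpha> M i j"
  unfolding tauT1_def T0_def Hank_def av_def Hv_def by (simp add: algebra_simps Let_def)

lemma tauT1_dim: "dim_row (tauT1 \<mu> \<alpha> M) = M" "dim_col (tauT1 \<mu> \<alpha> M) = M"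
  unfolding tauT1_def T0_def Hank_def by auto

lemma sum_split:
  fixes g :: "nat \<Rightarrow> 'a::comm_monoid_add"
  shows "(\<Sum>I<m*n. g I) = (\<Sum>p<m. \<Sum>i<n. g (p*n + i))"
proof -
  have "(\<Sum>I\<in>{p*n..<p*n+n}. g I) = (\<Sum>i<n. g (p*n+i))" for p
    using sum.shift_bounds_nat_ivl[of g 0 "p*n" n] by (simp add: atLeast0LessThan add.commute)
  then have "(\<Sum>p<m. \<Sum>i<n. g (p*n + i)) = (\<Sum>p<m. \<Sum>I\<in>{p*n..<p*n+n}. g I)" by simp
  also have "\<dots> = (\<Sum>I<m*n. g I)" by (rule sum.nat_group)
  finally show ?thesis by simp
qed

lemma sum_rev_shift: "(\<Sum>j<i. g (i - j)) = (\<Sum>k<i. g (Suc k))"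
proof (induction i)
  case 0 then show ?case by simp
next
  case (Suc i)
  have "(\<Sum>j<Suc i. g (Suc i - j)) = g (Suc i) + (\<Sum>j<i. g (Suc i - Suc j))"
    by (subst sum.lessThan_Suc_shift) simp
  also have "\<dots> = g (Suc i) + (\<Sum>k<i. g (Suc k))" using Suc by simp
  also have "\<dots> = (\<Sum>k<Suc i. g (Suc k))" by (simp add: add.commute)
  finally show ?case .
qed

context
  fixes \<alpha> :: real
  assumes a1: "1 < \<alpha>" and a2: "\<alpha> \<le> 2"
begin

lemma Hv_cases:
  assumes i: "i < M" and j: "j < M"
  shows "(\<exists>m. 2 \<le> m \<and> (if i \<le> j then j - i else i - j) \<le> m \<and> Hv \<alpha> M i j = frac_coeff \<alpha> (int m)) \<or> Hv \<alpha> M i j = 0"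
proof -
  consider (A) "int i + int j + 2 \<le> int M - 1" | (B) "\<not> int i + int j + 2 \<le> int M - 1" "int i + int j + 2 \<le> int M + 2"
    | (C) "\<not> int i + int j + 2 \<le> int M + 2" by linarith
  then show ?thesis
  proof cases
    case A
    then have "Hv \<alpha> M i j = frac_coeff \<alpha> (int (i+j+2))" unfolding Hv_def by (simp add: Let_def ac_simps)
    then show ?thesis by (intro disjI1 exI[of _ "i+j+2"]) auto
  next
    case B
    then show ?thesis unfolding Hv_def by (simp add: Let_def)
  next
    case C
    have e: "2 * int M + 2 - (int i + int j + 2) = int (2*M - i - j)" using i j by simp
    have "Hv \<alpha> M i j = frac_coeff \<alpha> (int (2*M - i - j))" using C unfolding Hv_def e[symmetric] by (simp add: Let_def)
    then show ?thesis using i j by (intro disjI1 exI[of _ "2*M - i - j"]) auto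
  qed
qed

lemma Hv_bounds: assumes "i < M" "j < M"
  shows "Hv \<alpha> M i j \<le> 0 \<and> frac_coeff \<alpha> (int 2) \<le> Hv \<alpha> M i j"
  using Hv_cases[OF assms]
proof
  assume "\<exists>m. 2 \<le> m \<and> (if i \<le> j then j - i else i - j) \<le> m \<and> Hv \<alpha> M i j = frac_coeff \<alpha> (int m)"
  then obtain m where m: "2 \<le> m" "Hv \<alpha> M i j = frac_coeff \<alpha> (int m)" by blast
  then show ?thesis using c_nonpos[OF a1 a2, of m] c_mono[OF a1 a2, of 2 m] by simp
next
  assume "Hv \<alpha> M i j = 0"
  then show ?thesis using c_nonpos[OF a1 a2, of 2] by simp
qed

lemma av_off: assumes "i < M" "j < M" "i \<noteq> j" shows "av \<alpha> M i j \<le> 0"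
proof -
  define d where "d = (if i \<le> j then j - i else i - j)"
  have d1: "1 \<le> d" using assms unfolding d_def by auto
  have av: "av \<alpha> M i j = frac_coeff \<alpha> (int d) - Hv \<alpha> M i j" unfolding av_def d_def using fc_abs by simp
  from Hv_cases[OF assms(1,2)] show ?thesis
  proof
    assume "\<exists>m. 2 \<le> m \<and> (if i \<le> j then j - i else i - j) \<le> m \<and> Hv \<alpha> M i j = frac_coeff \<alpha> (int m)"
    then obtain m where m: "d \<le> m" "Hv \<alpha> M i j = frac_coeff \<alpha> (int m)" unfolding d_def by blast
    then show ?thesis using av c_mono[OF a1 a2 d1 m(1)] by simp
  next
    assume "Hv \<alpha> M i j = 0"
    then show ?thesis using av c_nonpos[OF a1 a2 d1] by simp
  qed
qed

lemma av_adj: assumes "i + 1 < M" shows "av \<alpha> M i (i+1) < 0"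
proof -
  have "av \<alpha> M i (i+1) = frac_coeff \<alpha> (int 1) - Hv \<alpha> M i (i+1)"
    unfolding av_def using fc_sym[of \<alpha> 1] by simp
  then show ?thesis using Hv_bounds[of i M "i+1"] assms c2_gt_c1[OF a1 a2] by simp
qed

lemma av_sym: "av \<alpha> M i j = av \<alpha> M j i"
proof -
  have "frac_coeff \<alpha> (int i - int j) = frac_coeff \<alpha> (int j - int i)"
    using fc_sym[of \<alpha> "int j - int i"] by simp
  moreover have "Hv \<alpha> M i j = Hv \<alpha> M j i" unfolding Hv_def by (simp add: add.commute)
  ultimately show ?thesis unfolding av_def by simp
qed

lemma row_c: assumes i: "i < M"
  shows "(\<Sum>j<M. frac_coeff \<alpha> (int i - int j)) = Pf \<alpha> i + Pf \<alpha> (M - 1 - i)"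
proof -
  define f where "f j = frac_coeff \<alpha> (int i - int j)" for j
  have eq: "{..<M} = {..<i} \<union> {i..<M}" using i by auto
  have s1: "(\<Sum>j<M. f j) = (\<Sum>j<i. f j) + (\<Sum>j\<in>{i..<M}. f j)"
    by (subst eq) (rule sum.union_disjoint, auto)
  have s2: "(\<Sum>j<i. f j) = (\<Sum>k<i. frac_coeff \<alpha> (int (Suc k)))"
  proof -
    have "(\<Sum>j<i. f j) = (\<Sum>j<i. frac_coeff \<alpha> (int (i - j)))"
      unfolding f_def by (intro sum.cong refl) (simp add: of_nat_diff)
    also have "\<dots> = (\<Sum>k<i. frac_coeff \<alpha> (int (Suc k)))" by (rule sum_rev_shift)
    finally show ?thesis .
  qed
  have s3: "(\<Sum>k\<le>i. frac_coeff \<alpha> (int k)) = frac_coeff \<alpha> 0 + (\<Sum>k<i. frac_coeff \<alpha> (int (Suc k)))"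
    by (subst sum.atMost_shift) simp
  have s4: "(\<Sum>j\<in>{i..<M}. f j) = (\<Sum>k<M - i. frac_coeff \<alpha> (int k))"
  proof -
    have "(\<Sum>j\<in>{i..<M}. f j) = (\<Sum>j\<in>{i..<M}. frac_coeff \<alpha> (int (j - i)))"
      unfolding f_def using fc_abs by (intro sum.cong refl) auto
    also have "\<dots> = (\<Sum>k<M - i. frac_coeff \<alpha> (int k))"
    proof -
      have e: "{i..<M} = {0+i..<(M-i)+i}" using i by simp
      show ?thesis by (subst e, subst sum.shift_bounds_nat_ivl) (simp add: atLeast0LessThan)
    qed
    finally show ?thesis .
  qed
  have s5: "(\<Sum>k<M - i. frac_coeff \<alpha> (int k)) = (\<Sum>k\<le>M - 1 - i. frac_coeff \<alpha> (int k))"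
  proof -
    have "M - i = Suc (M - 1 - i)" using i by simp
    then show ?thesis by (simp only: lessThan_Suc_atMost)
  qed
  show ?thesis using s1 s2 s3 s4 s5 sum_c[OF a1 a2, of i] sum_c[OF a1 a2, of "M - 1 - i"]
    unfolding f_def by simp
qed

lemma row_av: assumes i: "i < M"
  shows "Pf \<alpha> i + Pf \<alpha> (M - 1 - i) - Hv \<alpha> M i i \<le> (\<Sum>j<M. av \<alpha> M i j)"
proof -
  have "(\<Sum>j<M. Hv \<alpha> M i j) = Hv \<alpha> M i i + (\<Sum>j\<in>{..<M} - {i}. Hv \<alpha> M i j)"
    using i by (subst sum.remove[of _ i]) auto
  also have "(\<Sum>j\<in>{..<M} - {i}. Hv \<alpha> M i j) \<le> 0"
    using Hv_bounds[of i M] i by (intro sum_nonpos) auto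
  finally have "(\<Sum>j<M. Hv \<alpha> M i j) \<le> Hv \<alpha> M i i" by simp
  moreover have "(\<Sum>j<M. av \<alpha> M i j) = (\<Sum>j<M. frac_coeff \<alpha> (int i - int j)) - (\<Sum>j<M. Hv \<alpha> M i j)"
    unfolding av_def by (simp add: sum_subtractf)
  ultimately show ?thesis using row_c[OF i] by simp
qed

lemma av_diag: "av \<alpha> M i i = frac_coeff \<alpha> 0 - Hv \<alpha> M i i" unfolding av_def by simp

lemma one_dim_bounds:
  fixes x :: "nat \<Rightarrow> real"
  assumes M: "2 \<le> M" and nz: "\<exists>i<M. x i \<noteq> 0"
  defines "th \<equiv> theta_const \<alpha> / real (M+1) powr \<alpha>"
  shows "2 * th * (\<Sum>i<M. (x i)\<^sup>2) < (\<Sum>i<M. \<Sum>j<M. av \<alpha> M i j * x i * x j)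
       \<and> (\<Sum>i<M. \<Sum>j<M. av \<alpha> M i j * x i * x j)
          < (2 * frac_coeff \<alpha> 0 - frac_coeff \<alpha> 2 - 2 * th) * (\<Sum>i<M. (x i)\<^sup>2)"
proof (rule quad_bounds[OF M])
  have Pth: "th \<le> Pf \<alpha> (M - 1)" unfolding th_def using Pf_theta[OF a1 a2, of M] M by simp
  have P0: "Pf \<alpha> (M - 1) < Pf \<alpha> 0" using Pf_strict[OF a1 a2, of "M - 1"] M by simp
  have Pi: "Pf \<alpha> (M - 1) \<le> Pf \<alpha> i" "Pf \<alpha> (M - 1) \<le> Pf \<alpha> (M - 1 - i)" if "i < M" for i
    using Pf_antimono[OF a1 a2, of i "M - 1"] Pf_antimono[OF a1 a2, of "M - 1 - i" "M - 1"] that by auto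
  show "\<And>i j. i < M \<Longrightarrow> j < M \<Longrightarrow> av \<alpha> M i j = av \<alpha> M j i" by (rule av_sym)
  show "\<And>i j. i < M \<Longrightarrow> j < M \<Longrightarrow> i \<noteq> j \<Longrightarrow> av \<alpha> M i j \<le> 0" by (rule av_off)
  show "\<And>i. i + 1 < M \<Longrightarrow> av \<alpha> M i (i + 1) < 0" by (rule av_adj)
  show "\<exists>i<M. x i \<noteq> 0" by (rule nz)
  show "\<And>i. i < M \<Longrightarrow> 2 * th \<le> (\<Sum>j<M. av \<alpha> M i j)"
  proof -
    fix i assume i: "i < M"
    show "2 * th \<le> (\<Sum>j<M. av \<alpha> M i j)" using row_av[OF i] Pi[OF i] Pth Hv_bounds[OF i i] by linarith
  qed
  have M0: "0 < M" using M by simp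
  show "2 * th < (\<Sum>j<M. av \<alpha> M 0 j)"
    using row_av[OF M0] Pth P0 Hv_bounds[OF M0 M0] by simp
  show "\<And>i. i < M \<Longrightarrow> 2 * av \<alpha> M i i - (\<Sum>j<M. av \<alpha> M i j) \<le> 2 * frac_coeff \<alpha> 0 - frac_coeff \<alpha> 2 - 2 * th"
  proof -
    fix i assume i: "i < M"
    show "2 * av \<alpha> M i i - (\<Sum>j<M. av \<alpha> M i j) \<le> 2 * frac_coeff \<alpha> 0 - frac_coeff \<alpha> 2 - 2 * th"
      using row_av[OF i] Pi[OF i] Pth Hv_bounds[OF i i] av_diag[of M i] by simp
  qed
  show "2 * av \<alpha> M 0 0 - (\<Sum>j<M. av \<alpha> M 0 j) < 2 * frac_coeff \<alpha> 0 - frac_coeff \<alpha> 2 - 2 * th"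
    using row_av[OF M0] Pth P0 Hv_bounds[OF M0 M0] av_diag[of M 0] by simp
qed

end

lemma tauT2_dim: "dim_row (tauT2 \<mu> \<alpha> M) = M * M" "dim_col (tauT2 \<mu> \<alpha> M) = M * M"
  unfolding tauT2_def kron_def by (simp_all add: tauT1_dim)

lemma divmod_lt: fixes I M :: nat assumes "I < M * M" shows "I div M < M" "I mod M < M"
proof -
  have M: "0 < M" using assms by (cases M) auto
  show "I mod M < M" using M by simp
  show "I div M < M" using assms by (simp add: less_mult_imp_div_less)
qed

lemma tauT2_index:
  assumes I: "I < M * M" and J: "J < M * M"
  shows "tauT2 \<mu> \<alpha> M $$ (I,J) =
     (if I div M = J div M then \<mu> * av \<alpha> M (I mod M) (J mod M) else 0)
   + (if I mod M = J mod M then \<mu> * av \<alpha> M (I div M) (J div M) else 0)"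
  using divmod_lt[OF I] divmod_lt[OF J] I J
  unfolding tauT2_def kron_def by (simp add: tauT1_dim tauT1_index)

lemma quad_le:
  fixes x :: "nat \<Rightarrow> real"
  assumes a1: "1 < \<alpha>" and a2: "\<alpha> \<le> 2" and M: "2 \<le> M"
  defines "th \<equiv> theta_const \<alpha> / real (M+1) powr \<alpha>"
  defines "Qf \<equiv> (\<Sum>i<M. \<Sum>j<M. av \<alpha> M i j * x i * x j)"
  shows "2 * th * (\<Sum>i<M. (x i)\<^sup>2) \<le> Qf \<and> Qf \<le> (2 * frac_coeff \<alpha> 0 - frac_coeff \<alpha> 2 - 2 * th) * (\<Sum>i<M. (x i)\<^sup>2)"
    "(\<exists>i<M. x i \<noteq> 0) \<Longrightarrow> 2 * th * (\<Sum>i<M. (x i)\<^sup>2) < Qf \<and> Qf < (2 * frac_coeff \<alpha> 0 - frac_coeff \<alpha> 2 - 2 * th) * (\<Sum>i<M. (x i)\<^sup>2)"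
proof -
  show "(\<exists>i<M. x i \<noteq> 0) \<Longrightarrow> 2 * th * (\<Sum>i<M. (x i)\<^sup>2) < Qf \<and> Qf < (2 * frac_coeff \<alpha> 0 - frac_coeff \<alpha> 2 - 2 * th) * (\<Sum>i<M. (x i)\<^sup>2)"
    unfolding th_def Qf_def by (rule one_dim_bounds[OF a1 a2 M])
  then show "2 * th * (\<Sum>i<M. (x i)\<^sup>2) \<le> Qf \<and> Qf \<le> (2 * frac_coeff \<alpha> 0 - frac_coeff \<alpha> 2 - 2 * th) * (\<Sum>i<M. (x i)\<^sup>2)"
  proof (cases "\<exists>i<M. x i \<noteq> 0")
    case True then show ?thesis using \<open>(\<exists>i<M. x i \<noteq> 0) \<Longrightarrow> _\<close> by auto
  next
    case False
    then have "Qf = 0" "(\<Sum>i<M. (x i)\<^sup>2) = 0" unfolding Qf_def by auto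
    then show ?thesis by simp
  qed
qed

lemma nonzero_vec:
  assumes "v \<in> carrier_vec n" "v \<noteq> 0\<^sub>v n"
  shows "\<exists>I<n. vec_index v I \<noteq> 0"
proof (rule ccontr)
  assume "\<not> ?thesis"
  then have "v = 0\<^sub>v n" using assms(1) by (intro eq_vecI) auto
  then show False using assms(2) by simp
qed

lemma quad_total:
  fixes y :: "nat \<Rightarrow> nat \<Rightarrow> real" and x :: "nat \<Rightarrow> real"
  assumes x: "\<And>p i. p < M \<Longrightarrow> i < M \<Longrightarrow> y p i = x (p*M + i)"
  shows "(\<Sum>I<M*M. \<Sum>J<M*M. x I * tauT2 \<mu> \<alpha> M $$ (I,J) * x J)
     = \<mu> * ((\<Sum>p<M. \<Sum>i<M. \<Sum>j<M. av \<alpha> M i j * y p i * y p j)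
          + (\<Sum>i<M. \<Sum>p<M. \<Sum>q<M. av \<alpha> M p q * y p i * y q i))"
proof -
  have idx: "tauT2 \<mu> \<alpha> M $$ (p*M+i, q*M+j) =
       (if p = q then \<mu> * av \<alpha> M i j else 0) + (if i = j then \<mu> * av \<alpha> M p q else 0)"
    if "p<M" "i<M" "q<M" "j<M" for p i q j
  proof -
    have lt0: "a*M+b < M*M" if "a < M" "b < M" for a b
    proof -
      have "a*M+b < (a+1)*M" using that by simp
      also have "(a+1)*M \<le> M*M" using that by (intro mult_le_mono1) simp
      finally show ?thesis .
    qed
    have lt: "p*M+i < M*M" "q*M+j < M*M" using that lt0 by auto
    have d: "(p*M+i) div M = p" "(p*M+i) mod M = i" "(q*M+j) div M = q" "(q*M+j) mod M = j" using that by auto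
    show ?thesis using tauT2_index[OF lt, of \<mu> \<alpha>] by (simp only: d)
  qed
  have "(\<Sum>I<M*M. \<Sum>J<M*M. x I * tauT2 \<mu> \<alpha> M $$ (I,J) * x J)
      = (\<Sum>p<M. \<Sum>i<M. \<Sum>q<M. \<Sum>j<M. x (p*M+i) * tauT2 \<mu> \<alpha> M $$ (p*M+i, q*M+j) * x (q*M+j))"
    by (simp only: sum_split)
  also have "\<dots> = (\<Sum>p<M. \<Sum>i<M. \<Sum>q<M. \<Sum>j<M.
        (if p = q then \<mu> * (av \<alpha> M i j * y p i * y p j) else 0) + (if i = j then \<mu> * (av \<alpha> M p q * y p i * y q i) else 0))"
    by (intro sum.cong refl, subst idx) (auto simp: x algebra_simps)
  also have "\<dots> = (\<Sum>p<M. \<Sum>i<M. \<mu> * (\<Sum>j<M. av \<alpha> M i j * y p i * y p j) + \<mu> * (\<Sum>q<M. av \<alpha> M p q * y p i * y q i))"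
  proof (intro sum.cong refl)
    fix p i assume p: "p \<in> {..<M}" and i: "i \<in> {..<M}"
    have "(\<Sum>q<M. \<Sum>j<M. (if p = q then \<mu> * (av \<alpha> M i j * y p i * y p j) else 0) + (if i = j then \<mu> * (av \<alpha> M p q * y p i * y q i) else 0))
       = (\<Sum>q<M. (if p = q then (\<Sum>j<M. \<mu> * (av \<alpha> M i j * y p i * y p j)) else 0) + \<mu> * (av \<alpha> M p q * y p i * y q i))"
      using i by (intro sum.cong refl) (simp add: sum.distrib sum.delta)
    also have "\<dots> = (\<Sum>j<M. \<mu> * (av \<alpha> M i j * y p i * y p j)) + (\<Sum>q<M. \<mu> * (av \<alpha> M p q * y p i * y q i))"
      using p by (simp add: sum.distrib sum.delta)
    finally show "(\<Sum>q<M. \<Sum>j<M. (if p = q then \<mu> * (av \<alpha> M i j * y p i * y p j) else 0) + (if i = j then \<mu> * (av \<alpha> M p q * y p i * y q i) else 0))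
       = \<mu> * (\<Sum>j<M. av \<alpha> M i j * y p i * y p j) + \<mu> * (\<Sum>q<M. av \<alpha> M p q * y p i * y q i)"
      by (simp add: sum_distrib_left)
  qed
  also have "\<dots> = \<mu> * (\<Sum>p<M. \<Sum>i<M. \<Sum>j<M. av \<alpha> M i j * y p i * y p j) + \<mu> * (\<Sum>p<M. \<Sum>i<M. \<Sum>q<M. av \<alpha> M p q * y p i * y q i)"
    by (simp add: sum.distrib sum_distrib_left)
  also have "(\<Sum>p<M. \<Sum>i<M. \<Sum>q<M. av \<alpha> M p q * y p i * y q i) = (\<Sum>i<M. \<Sum>p<M. \<Sum>q<M. av \<alpha> M p q * y p i * y q i)"
    by (rule sum.swap)
  finally show ?thesis by (simp add: distrib_left)
qed

theorem lemma5:
  fixes a b \<Delta>t \<alpha> :: real and M :: nat and ev :: real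
  assumes "a < b" and "\<Delta>t > 0" and "M \<ge> 4" and "even M"
    and "1 < \<alpha>" and "\<alpha> \<le> 2"
    and "eigenvalue (tauT2 (\<Delta>t / ((b - a) / real (M + 1)) powr \<alpha>) \<alpha> M) ev"
  shows "4 * \<Delta>t * theta_const \<alpha> / (b - a) powr \<alpha> < ev
    \<and> ev < 4 * \<Delta>t / ((b - a) / real (M + 1)) powr \<alpha>
            * (Gamma (\<alpha> + 1) / (Gamma (\<alpha>/2 + 1))\<^sup>2
               - theta_const \<alpha> * ((b - a) / real (M + 1)) powr \<alpha> / (b - a) powr \<alpha>)
          - 2 * frac_coeff \<alpha> 2 * \<Delta>t / ((b - a) / real (M + 1)) powr \<alpha>"
proof -
  note a1 = assms(5) and a2 = assms(6)
  have M2: "2 \<le> M" using assms(3) by simp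
  define h where "h = (b - a) / real (M + 1)"
  define \<mu> where "\<mu> = \<Delta>t / h powr \<alpha>"
  define th where "th = theta_const \<alpha> / real (M+1) powr \<alpha>"
  define U where "U = 2 * frac_coeff \<alpha> 0 - frac_coeff \<alpha> 2 - 2 * th"
  define B where "B = tauT2 \<mu> \<alpha> M"
  have hpos: "h > 0" unfolding h_def using assms(1) by simp
  have mupos: "\<mu> > 0" unfolding \<mu>_def using hpos assms(2) by simp
  from assms(7) obtain v where v: "v \<in> carrier_vec (M*M)" "v \<noteq> 0\<^sub>v (M*M)" "B *\<^sub>v v = ev \<cdot>\<^sub>v v"
    unfolding eigenvalue_def eigenvector_def B_def \<mu>_def h_def by (auto simp: tauT2_dim)
  define x where "x I = vec_index v I" for I
  define y where "y p i = x (p*M + i)" for p i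
  have dimv: "dim_vec v = M*M" using v(1) by simp
  have Bv: "vec_index (B *\<^sub>v v) I = (\<Sum>J<M*M. B $$ (I,J) * x J)" if "I < M*M" for I
    using that dimv unfolding x_def B_def
    by (simp add: tauT2_dim scalar_prod_def atLeast0LessThan)
  have E: "(\<Sum>I<M*M. \<Sum>J<M*M. x I * B $$ (I,J) * x J) = ev * (\<Sum>I<M*M. (x I)\<^sup>2)"
  proof -
    have "(\<Sum>I<M*M. \<Sum>J<M*M. x I * B $$ (I,J) * x J) = (\<Sum>I<M*M. x I * vec_index (B *\<^sub>v v) I)"
      by (intro sum.cong refl) (simp add: Bv sum_distrib_left mult.assoc)
    also have "\<dots> = (\<Sum>I<M*M. x I * (ev * x I))"
      using v(3) dimv by (intro sum.cong refl) (simp add: x_def)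
    also have "\<dots> = ev * (\<Sum>I<M*M. (x I)\<^sup>2)"
      by (simp add: sum_distrib_left power2_eq_square algebra_simps)
    finally show ?thesis .
  qed
  have QT: "(\<Sum>I<M*M. \<Sum>J<M*M. x I * B $$ (I,J) * x J)
     = \<mu> * ((\<Sum>p<M. \<Sum>i<M. \<Sum>j<M. av \<alpha> M i j * y p i * y p j)
          + (\<Sum>i<M. \<Sum>p<M. \<Sum>q<M. av \<alpha> M p q * y p i * y q i))"
    unfolding B_def by (rule quad_total) (simp add: y_def)
  define S where "S = (\<Sum>p<M. \<Sum>i<M. (y p i)\<^sup>2)"
  have S_eq: "(\<Sum>I<M*M. (x I)\<^sup>2) = S" unfolding S_def y_def by (rule sum_split)
  have S_swap: "(\<Sum>i<M. \<Sum>p<M. (y p i)\<^sup>2) = S" unfolding S_def by (rule sum.swap)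
  obtain I where I: "I < M*M" "x I \<noteq> 0" using nonzero_vec[OF v(1,2)] unfolding x_def by blast
  define p0 where "p0 = I div M"
  define i0 where "i0 = I mod M"
  have p0: "p0 < M" "i0 < M" using divmod_lt[OF I(1)] unfolding p0_def i0_def by auto
  have yp0: "y p0 i0 \<noteq> 0" unfolding y_def p0_def i0_def using I(2) by (simp add: mult.commute)
  have Spos: "S > 0"
  proof -
    have "0 < (y p0 i0)\<^sup>2" using yp0 by simp
    also have "(y p0 i0)\<^sup>2 \<le> (\<Sum>i<M. (y p0 i)\<^sup>2)" using p0 by (intro member_le_sum) auto
    also have "\<dots> \<le> S" unfolding S_def using p0 by (intro member_le_sum[where f="\<lambda>p. \<Sum>i<M. (y p i)\<^sup>2"]) (auto intro: sum_nonneg)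
    finally show ?thesis .
  qed
  define Q1 where "Q1 p = (\<Sum>i<M. \<Sum>j<M. av \<alpha> M i j * y p i * y p j)" for p
  define Q2 where "Q2 i = (\<Sum>p<M. \<Sum>q<M. av \<alpha> M p q * y p i * y q i)" for i
  have Q1b: "2 * th * (\<Sum>i<M. (y p i)\<^sup>2) \<le> Q1 p \<and> Q1 p \<le> U * (\<Sum>i<M. (y p i)\<^sup>2)" for p
    unfolding Q1_def U_def th_def by (rule quad_le(1)[OF a1 a2 M2])
  have Q1s: "2 * th * (\<Sum>i<M. (y p0 i)\<^sup>2) < Q1 p0 \<and> Q1 p0 < U * (\<Sum>i<M. (y p0 i)\<^sup>2)"
    unfolding Q1_def U_def th_def using p0 yp0 by (intro quad_le(2)[OF a1 a2 M2]) auto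
  have Q2b: "2 * th * (\<Sum>p<M. (y p i)\<^sup>2) \<le> Q2 i \<and> Q2 i \<le> U * (\<Sum>p<M. (y p i)\<^sup>2)" for i
    unfolding Q2_def U_def th_def by (rule quad_le(1)[OF a1 a2 M2])
  have L1: "(\<Sum>p<M. 2 * th * (\<Sum>i<M. (y p i)\<^sup>2)) < (\<Sum>p<M. Q1 p)"
    using Q1b Q1s p0 by (intro sum_strict_mono_ex1) auto
  have U1: "(\<Sum>p<M. Q1 p) < (\<Sum>p<M. U * (\<Sum>i<M. (y p i)\<^sup>2))"
    using Q1b Q1s p0 by (intro sum_strict_mono_ex1) auto
  have L2: "(\<Sum>i<M. 2 * th * (\<Sum>p<M. (y p i)\<^sup>2)) \<le> (\<Sum>i<M. Q2 i)"
    using Q2b by (intro sum_mono) auto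
  have U2: "(\<Sum>i<M. Q2 i) \<le> (\<Sum>i<M. U * (\<Sum>p<M. (y p i)\<^sup>2))"
    using Q2b by (intro sum_mono) auto
  have tot: "ev * S = \<mu> * ((\<Sum>p<M. Q1 p) + (\<Sum>i<M. Q2 i))"
    using E QT S_eq unfolding Q1_def Q2_def by simp
  have lowS: "4 * th * S < (\<Sum>p<M. Q1 p) + (\<Sum>i<M. Q2 i)"
    using L1 L2 S_swap unfolding S_def by (simp add: sum_distrib_left[symmetric])
  have upS: "(\<Sum>p<M. Q1 p) + (\<Sum>i<M. Q2 i) < 2 * U * S"
    using U1 U2 S_swap unfolding S_def by (simp add: sum_distrib_left[symmetric])
  have evlow: "4 * \<mu> * th < ev"
  proof -
    have "\<mu> * (4 * th * S) < \<mu> * ((\<Sum>p<M. Q1 p) + (\<Sum>i<M. Q2 i))"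
      using lowS mupos by (intro mult_strict_left_mono) auto
    then have "(4 * \<mu> * th) * S < ev * S" using tot by (simp add: algebra_simps)
    then show ?thesis using Spos by simp
  qed
  have evup: "ev < 2 * \<mu> * U"
  proof -
    have "\<mu> * ((\<Sum>p<M. Q1 p) + (\<Sum>i<M. Q2 i)) < \<mu> * (2 * U * S)"
      using upS mupos by (intro mult_strict_left_mono) auto
    then have "ev * S < (2 * \<mu> * U) * S" using tot by (simp add: algebra_simps)
    then show ?thesis using Spos by simp
  qed
  have ba: "(b - a) powr \<alpha> = h powr \<alpha> * real (M+1) powr \<alpha>"
  proof -
    have "b - a = h * real (M+1)" unfolding h_def by simp
    then show ?thesis using hpos by (simp add: powr_mult)
  qed
  have hp: "h powr \<alpha> > 0" "real (M+1) powr \<alpha> > 0" using hpos by auto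
  have e1: "4 * \<Delta>t * theta_const \<alpha> / (b - a) powr \<alpha> = 4 * \<mu> * th"
    unfolding \<mu>_def th_def ba using hp by (simp add: field_simps)
  have e2: "4 * \<Delta>t / h powr \<alpha> * (Gamma (\<alpha> + 1) / (Gamma (\<alpha>/2 + 1))\<^sup>2
               - theta_const \<alpha> * h powr \<alpha> / (b - a) powr \<alpha>)
          - 2 * frac_coeff \<alpha> 2 * \<Delta>t / h powr \<alpha> = 2 * \<mu> * U"
    unfolding \<mu>_def U_def th_def ba fc0_eq[symmetric] using hp by (simp add: field_simps)
  show ?thesis using evlow evup e1 e2 unfolding h_def by simp
qed

end
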